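(* In every tranca mínima (as defined in the context), the losing team places at least one tile during the game.
   Context: Domino tiles: the set of tiles consists of the 28 unordered pairs $[a,b]=[b,a]$ with $a,b\in\{0,1,\dots,6\}$; the number of points (pips) of $[a,b]$ is $a+b$. Four players, numbered 1 to 4, play; players 1 and 3 form one team and players 2 and 4 the other. The 28 tiles are dealt, 7 to each player (the initial hands). Players take turns in cyclic order $1,2,3,4,1,\dots$. The starting player places any one of their tiles on the table, forming a line of tiles (the board) with two open ends. On each subsequent turn, the player whose turn it is must, if they hold a tile containing a number equal to the number shown at one of the two open ends, place such a tile at that end (with equal numbers adjacent), the other number of the tile becoming the new open end; if they hold no such tile, they pass. A game ends either when a player places their last tile, or in a tranca (blocked game): a position in which no player holds a tile that can be placed. In a game ending in a tranca, the team whose two players' remaining tiles have the smaller total number of pips wins, and the other team is the losing team. A tranca mínima is a game ending in a tranca in which the total number of pips on the tiles of the board at the end of the game is $42$. *)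

theory Defs
  imports Main
begin

text \<open>A tile [a,b] is represented canonically as the pair (a,b) with a \<le> b \<le> 6.
  Players are numbered 1..4; teams are {1,3} and {2,4}.\<close>

type_synonym tile = "nat \<times> nat"

definition all_tiles :: "tile set" where
  "all_tiles = {(a,b). a \<le> b \<and> b \<le> 6}"

definition pips :: "tile \<Rightarrow> nat" where
  "pips t = fst t + snd t"

definition players :: "nat set" where
  "players = {1,2,3,4}"

definition next_player :: "nat \<Rightarrow> nat" where
  "next_player p = p mod 4 + 1"

definition has_num :: "tile \<Rightarrow> nat \<Rightarrow> bool" where
  "has_num t n \<longleftrightarrow> fst t = n \<or> snd t = n"

definition other_num :: "tile \<Rightarrow> nat \<Rightarrow> nat" where
  "other_num t n = (if fst t = n then snd t else fst t)"

text \<open>Game state: the hands, the two open ends of the board (None before the first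
  tile), the list of placements (player, tile) in order, and whose turn it is.\<close>
record dstate =
  hands :: "nat \<Rightarrow> tile set"
  ends :: "(nat \<times> nat) option"
  placed :: "(nat \<times> tile) list"
  turn :: nat

definition initial_state :: "dstate \<Rightarrow> bool" where
  "initial_state s \<longleftrightarrow>
     (\<forall>p\<in>players. hands s p \<subseteq> all_tiles \<and> card (hands s p) = 7) \<and>
     (\<forall>p\<in>players. \<forall>q\<in>players. p \<noteq> q \<longrightarrow> hands s p \<inter> hands s q = {}) \<and>
     (\<Union>p\<in>players. hands s p) = all_tiles \<and>
     ends s = None \<and> placed s = [] \<and> turn s = 1"

definition can_play :: "dstate \<Rightarrow> nat \<Rightarrow> bool" where
  "can_play s p \<longleftrightarrow> (case ends s of
      None \<Rightarrow> hands s p \<noteq> {}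
    | Some (l, r) \<Rightarrow> (\<exists>t\<in>hands s p. has_num t l \<or> has_num t r))"

definition place :: "dstate \<Rightarrow> nat \<Rightarrow> tile \<Rightarrow> (nat \<times> nat) \<Rightarrow> dstate \<Rightarrow> bool" where
  "place s p t e s' \<longleftrightarrow>
     hands s' = (hands s)(p := hands s p - {t}) \<and> ends s' = Some e \<and>
     placed s' = placed s @ [(p, t)] \<and> turn s' = next_player p"

definition step :: "dstate \<Rightarrow> dstate \<Rightarrow> bool" where
  "step s s' \<longleftrightarrow> (let p = turn s in
     (ends s = None \<and> (\<exists>t\<in>hands s p. place s p t (fst t, snd t) s')) \<or>
     (\<exists>l r. ends s = Some (l, r) \<and>
        ((\<exists>t\<in>hands s p. has_num t l \<and> place s p t (other_num t l, r) s') \<or>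
         (\<exists>t\<in>hands s p. has_num t r \<and> place s p t (l, other_num t r) s') \<or>
         (\<not> can_play s p \<and> hands s' = hands s \<and> ends s' = ends s \<and>
          placed s' = placed s \<and> turn s' = next_player p))))"

definition someone_out :: "dstate \<Rightarrow> bool" where
  "someone_out s \<longleftrightarrow> (\<exists>p\<in>players. hands s p = {})"

definition blocked :: "dstate \<Rightarrow> bool" where
  "blocked s \<longleftrightarrow> ends s \<noteq> None \<and> (\<forall>p\<in>players. \<not> can_play s p)"

definition tranca_game :: "dstate list \<Rightarrow> bool" where
  "tranca_game ss \<longleftrightarrow> ss \<noteq> [] \<and> initial_state (ss ! 0) \<and>
     (\<forall>i. Suc i < length ss \<longrightarrow> step (ss ! i) (ss ! Suc i)) \<and>
     (\<forall>i. Suc i < length ss \<longrightarrow> \<not> someone_out (ss ! i) \<and> \<not> blocked (ss ! i)) \<and>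
     blocked (last ss) \<and> \<not> someone_out (last ss)"

definition board_pips :: "dstate \<Rightarrow> nat" where
  "board_pips s = (\<Sum>x\<leftarrow>placed s. pips (snd x))"

definition tranca_minima :: "dstate list \<Rightarrow> bool" where
  "tranca_minima ss \<longleftrightarrow> tranca_game ss \<and> board_pips (last ss) = 42"

definition teams :: "nat set set" where
  "teams = {{1,3},{2,4}}"

definition team_pips :: "dstate \<Rightarrow> nat set \<Rightarrow> nat" where
  "team_pips s T = (\<Sum>p\<in>T. \<Sum>t\<in>hands s p. pips t)"

definition losing_team :: "dstate list \<Rightarrow> nat set \<Rightarrow> bool" where
  "losing_team ss T \<longleftrightarrow> T \<in> teams \<and>
     team_pips (last ss) (players - T) < team_pips (last ss) T"

end

theory Submission
  imports Defs
begin

definition tnums :: "tile \<Rightarrow> nat set" where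
  "tnums t = {fst t, snd t}"

definition endset :: "dstate \<Rightarrow> nat set" where
  "endset s = (case ends s of None \<Rightarrow> {} | Some (l, r) \<Rightarrow> {l, r})"

lemma step_cases:
  assumes "step s s'"
  shows "(\<exists>t\<in>hands s (turn s). hands s' = (hands s)(turn s := hands s (turn s) - {t}) \<and>
           placed s' = placed s @ [(turn s, t)] \<and> turn s' = next_player (turn s) \<and>
           tnums t \<subseteq> endset s \<union> endset s' \<and> endset s' \<subseteq> endset s \<union> tnums t \<and> ends s' \<noteq> None)
       \<or> (ends s \<noteq> None \<and> \<not> can_play s (turn s) \<and> hands s' = hands s \<and> ends s' = ends s \<and>
           placed s' = placed s \<and> turn s' = next_player (turn s))"
  using assms
  unfolding step_def Let_def place_def tnums_def endset_def has_num_def other_num_def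
  by (auto split: if_splits)


lemma tg_step: "tranca_game ss \<Longrightarrow> Suc i < length ss \<Longrightarrow> step (ss ! i) (ss ! Suc i)"
  unfolding tranca_game_def by blast

lemma tg_init: "tranca_game ss \<Longrightarrow> initial_state (ss ! 0)"
  unfolding tranca_game_def by blast

lemma turn_inv:
  assumes "tranca_game ss" "j < length ss"
  shows "turn (ss ! j) = j mod 4 + 1"
  using assms(2)
proof (induction j)
  case 0 then show ?case using tg_init[OF assms(1)] by (simp add: initial_state_def)
next
  case (Suc j)
  have "step (ss ! j) (ss ! Suc j)" using tg_step[OF assms(1) Suc.prems] .
  then have "turn (ss ! Suc j) = next_player (turn (ss ! j))" using step_cases by blast
  then show ?case using Suc by (simp add: next_player_def mod_Suc)
qed

lemma ends_inv:
  assumes "tranca_game ss" "j < length ss" "j \<ge> 1"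
  shows "ends (ss ! j) \<noteq> None"
proof -
  obtain i where j: "j = Suc i" using assms(3) by (cases j) auto
  have st: "step (ss ! i) (ss ! Suc i)" using tg_step[OF assms(1)] assms(2) j by simp
  have "ends (ss ! Suc i) \<noteq> None"
    using step_cases[OF st] proof (elim disjE)
    assume "ends (ss ! i) \<noteq> None \<and> \<not> can_play (ss ! i) (turn (ss ! i)) \<and> hands (ss ! Suc i) = hands (ss ! i) \<and>
      ends (ss ! Suc i) = ends (ss ! i) \<and> placed (ss ! Suc i) = placed (ss ! i) \<and> turn (ss ! Suc i) = next_player (turn (ss ! i))"
    then show ?thesis by argo
  qed (elim bexE conjE, assumption)
  then show ?thesis using j by simp
qed

lemma hands_inv:
  assumes "tranca_game ss" "j < length ss"
  shows "(\<forall>p\<in>players. hands (ss ! j) p \<subseteq> all_tiles) \<and>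
         (\<forall>t\<in>all_tiles. (\<exists>p\<in>players. t \<in> hands (ss ! j) p) \<or> t \<in> snd ` set (placed (ss ! j))) \<and>
         endset (ss ! j) \<subseteq> {..6} \<and>
         (\<forall>x\<in>set (placed (ss ! j)). tnums (snd x) \<subseteq> (\<Union>k\<in>{1..j}. endset (ss ! k)))"
  using assms(2)
proof (induction j)
  case 0 then show ?case using tg_init[OF assms(1)] by (auto simp: initial_state_def endset_def)
next
  case (Suc j)
  let ?s = "ss ! j" and ?s' = "ss ! Suc j"
  have IH: "(\<forall>p\<in>players. hands ?s p \<subseteq> all_tiles) \<and>
         (\<forall>t\<in>all_tiles. (\<exists>p\<in>players. t \<in> hands ?s p) \<or> t \<in> snd ` set (placed ?s)) \<and>
         endset ?s \<subseteq> {..6} \<and>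
         (\<forall>x\<in>set (placed ?s). tnums (snd x) \<subseteq> (\<Union>k\<in>{1..j}. endset (ss ! k)))"
    using Suc by simp
  then have IH1: "\<forall>p\<in>players. hands ?s p \<subseteq> all_tiles"
    and IH2: "\<forall>t\<in>all_tiles. (\<exists>p\<in>players. t \<in> hands ?s p) \<or> t \<in> snd ` set (placed ?s)"
    and IH3: "endset ?s \<subseteq> {..6}"
    and IH4: "\<forall>x\<in>set (placed ?s). tnums (snd x) \<subseteq> (\<Union>k\<in>{1..j}. endset (ss ! k))"
    by blast+
  have st: "step ?s ?s'" using tg_step[OF assms(1) Suc.prems] .
  have tp: "turn ?s \<in> players" using turn_inv[OF assms(1)] Suc.prems
    by (simp add: players_def) presburger
  have sub: "(\<Union>k\<in>{1..j}. endset (ss ! k)) \<subseteq> (\<Union>k\<in>{1..Suc j}. endset (ss ! k))" by force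
  have e0: "j = 0 \<Longrightarrow> endset ?s = {}" using tg_init[OF assms(1)] by (simp add: initial_state_def endset_def)
  have es: "endset ?s \<subseteq> (\<Union>k\<in>{1..Suc j}. endset (ss ! k))"
  proof (cases "j = 0")
    case True then show ?thesis using e0 by simp
  next
    case False then have "j \<in> {1..Suc j}" by simp
    then show ?thesis by blast
  qed
  have "Suc j \<in> {1..Suc j}" by simp
  then have es': "endset ?s' \<subseteq> (\<Union>k\<in>{1..Suc j}. endset (ss ! k))" by blast
  from step_cases[OF st] show ?case
  proof
    assume "\<exists>t\<in>hands ?s (turn ?s). hands ?s' = (hands ?s)(turn ?s := hands ?s (turn ?s) - {t}) \<and>
           placed ?s' = placed ?s @ [(turn ?s, t)] \<and> turn ?s' = next_player (turn ?s) \<and>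
           tnums t \<subseteq> endset ?s \<union> endset ?s' \<and> endset ?s' \<subseteq> endset ?s \<union> tnums t \<and> ends ?s' \<noteq> None"
    then obtain t where t: "t \<in> hands ?s (turn ?s)" and h: "hands ?s' = (hands ?s)(turn ?s := hands ?s (turn ?s) - {t})"
      and pl: "placed ?s' = placed ?s @ [(turn ?s, t)]" and tn: "tnums t \<subseteq> endset ?s \<union> endset ?s'"
      and en: "endset ?s' \<subseteq> endset ?s \<union> tnums t" by blast
    have ta: "t \<in> all_tiles" using IH tp t by blast
    have "tnums t \<subseteq> {..6}" using ta by (auto simp: tnums_def all_tiles_def)
    then have A: "endset ?s' \<subseteq> {..6}" using en IH by blast
    have B: "\<forall>p\<in>players. hands ?s' p \<subseteq> all_tiles" using IH h by auto
    have C: "\<forall>u\<in>all_tiles. (\<exists>p\<in>players. u \<in> hands ?s' p) \<or> u \<in> snd ` set (placed ?s')"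
    proof
      fix u assume u: "u \<in> all_tiles"
      show "(\<exists>p\<in>players. u \<in> hands ?s' p) \<or> u \<in> snd ` set (placed ?s')"
      proof (cases "u = t")
        case True then show ?thesis using pl by force
      next
        case False
        then show ?thesis using IH u h pl by (auto split: if_splits) (metis fun_upd_apply Diff_iff singletonD)
      qed
    qed
    have D: "\<forall>x\<in>set (placed ?s'). tnums (snd x) \<subseteq> (\<Union>k\<in>{1..Suc j}. endset (ss ! k))"
    proof
      fix x assume "x \<in> set (placed ?s')"
      then have "x \<in> set (placed ?s) \<or> x = (turn ?s, t)" using pl by auto
      then show "tnums (snd x) \<subseteq> (\<Union>k\<in>{1..Suc j}. endset (ss ! k))"
      proof
        assume "x \<in> set (placed ?s)"
        then show ?thesis using IH sub by blast
      next
        assume "x = (turn ?s, t)"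
        then show ?thesis using tn es es' by auto
      qed
    qed
    show ?thesis using A B C D by blast
  next
    assume "ends ?s \<noteq> None \<and> \<not> can_play ?s (turn ?s) \<and> hands ?s' = hands ?s \<and> ends ?s' = ends ?s \<and>
           placed ?s' = placed ?s \<and> turn ?s' = next_player (turn ?s)"
    then have h: "hands ?s' = hands ?s" and p: "placed ?s' = placed ?s" and e: "endset ?s' = endset ?s"
      by (auto simp: endset_def)
    have D: "\<forall>x\<in>set (placed ?s'). tnums (snd x) \<subseteq> (\<Union>k\<in>{1..Suc j}. endset (ss ! k))"
      unfolding p using IH4 sub by blast
    show ?thesis unfolding h p e using IH1 IH2 IH3 D[unfolded p] by (intro conjI)
  qed
qed


lemma three_cover:
  assumes "finite (A::nat set)" "card A \<le> 3"
  shows "\<exists>x y z. A \<subseteq> {x, y, z}"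
proof -
  define xs where "xs = sorted_list_of_set A"
  have s: "set xs = A" and l: "length xs \<le> 3" using assms by (auto simp: xs_def)
  show ?thesis
  proof (cases xs)
    case Nil then show ?thesis using s by auto
  next
    case (Cons a ys) note c1 = Cons
    show ?thesis
    proof (cases ys)
      case Nil then show ?thesis using s c1 by auto
    next
      case (Cons b zs) note c2 = Cons
      show ?thesis
      proof (cases zs)
        case Nil then show ?thesis using s c1 c2 by auto
      next
        case (Cons c ws)
        then have "ws = []" using l c1 c2 by auto
        then show ?thesis using s c1 c2 Cons by auto
      qed
    qed
  qed
qed

lemma small_pairs:
  assumes "finite (A::nat set)" "card A \<le> 3"
  shows "card {(a,b). a \<in> A \<and> b \<in> A \<and> a \<le> b} \<le> 6"
proof -
  obtain x y z where A: "A \<subseteq> {x, y, z}" using three_cover[OF assms] by blast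
  have "{(a,b). a \<in> A \<and> b \<in> A \<and> a \<le> b} \<subseteq>
        set [(min x x, max x x), (min x y, max x y), (min x z, max x z),
             (min y y, max y y), (min y z, max y z), (min z z, max z z)]"
  proof
    fix p assume "p \<in> {(a,b). a \<in> A \<and> b \<in> A \<and> a \<le> b}"
    then obtain a b where p: "p = (a,b)" "a \<in> A" "b \<in> A" "a \<le> b" by blast
    then have "p = (min a b, max a b)" by simp
    then show "p \<in> set [(min x x, max x x), (min x y, max x y), (min x z, max x z),
             (min y y, max y y), (min y z, max y z), (min z z, max z z)]"
    proof -
      have "a = x \<or> a = y \<or> a = z" "b = x \<or> b = y \<or> b = z" using p A by blast+
      then show ?thesis using \<open>p = (min a b, max a b)\<close>
        by (elim disjE) (simp_all only: list.set insert_iff min.commute max.commute, simp_all)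
    qed
  qed
  then have "card {(a,b). a \<in> A \<and> b \<in> A \<and> a \<le> b} \<le> card (set [(min x x, max x x), (min x y, max x y), (min x z, max x z),
             (min y y, max y y), (min y z, max y z), (min z z, max z z)])"
    by (rule card_mono[rotated]) simp
  also have "\<dots> \<le> 6" by (rule order_trans[OF card_length]) simp
  finally show ?thesis .
qed


lemma step_placed_mono: "step s s' \<Longrightarrow> set (placed s) \<subseteq> set (placed s')"
  using step_cases[of s s'] by auto

lemma placed_mono:
  assumes "tranca_game ss" "j < length ss"
  shows "set (placed (ss ! j)) \<subseteq> set (placed (last ss))"
proof -
  have "\<forall>k. j + k < length ss \<longrightarrow> set (placed (ss ! j)) \<subseteq> set (placed (ss ! (j + k)))"
  proof
    fix k show "j + k < length ss \<longrightarrow> set (placed (ss ! j)) \<subseteq> set (placed (ss ! (j + k)))"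
    proof (induction k)
      case 0 then show ?case by simp
    next
      case (Suc k)
      show ?case
      proof
        assume a: "j + Suc k < length ss"
        then have "step (ss ! (j + k)) (ss ! Suc (j + k))" using tg_step[OF assms(1)] by simp
        then show "set (placed (ss ! j)) \<subseteq> set (placed (ss ! (j + Suc k)))"
          using Suc a step_placed_mono by fastforce
      qed
    qed
  qed
  then have "set (placed (ss ! j)) \<subseteq> set (placed (ss ! (j + (length ss - 1 - j))))"
    apply (rule allE[of _ "length ss - 1 - j"]) using assms(2) by linarith
  moreover have "ss \<noteq> []" using assms(2) by auto
  then have "ss ! (j + (length ss - 1 - j)) = last ss"
    using assms(2) by (simp add: last_conv_nth)
  ultimately show ?thesis by simp
qed

lemma noplay_disj:
  assumes "\<not> can_play s q" "ends s \<noteq> None" "t \<in> hands s q"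
  shows "tnums t \<inter> endset s = {}"
  using assms unfolding can_play_def tnums_def endset_def has_num_def
  by (auto split: option.splits)

theorem mainTheorem7:
  assumes "tranca_minima ss"
    and "losing_team ss T"
  shows "\<exists>p\<in>T. \<exists>t. (p, t) \<in> set (placed (last ss))"
proof (rule ccontr)
  assume neg: "\<not> (\<exists>p\<in>T. \<exists>t. (p, t) \<in> set (placed (last ss)))"
  have G: "tranca_game ss" using assms(1) by (simp add: tranca_minima_def)
  have ne: "ss \<noteq> []" and bl: "blocked (last ss)" using G by (auto simp: tranca_game_def)
  have I0: "initial_state (ss ! 0)" using tg_init[OF G] .
  define len where "len = length ss"
  have len2: "2 \<le> len"
  proof (rule ccontr)
    assume "\<not> 2 \<le> len"
    moreover have "len \<noteq> 0" using ne len_def by simp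
    ultimately have "len = 1" by linarith
    then have "last ss = ss ! 0" using ne len_def by (simp add: last_conv_nth)
    then show False using bl I0 by (simp add: blocked_def initial_state_def)
  qed
  have lastn: "last ss = ss ! (len - 1)" using ne len_def by (simp add: last_conv_nth)
  have NP: "\<And>i. Suc i < len \<Longrightarrow> turn (ss ! i) \<in> T \<Longrightarrow>
      ends (ss ! i) \<noteq> None \<and> \<not> can_play (ss ! i) (turn (ss ! i)) \<and> hands (ss ! Suc i) = hands (ss ! i) \<and>
      ends (ss ! Suc i) = ends (ss ! i)"
  proof -
    fix i assume i: "Suc i < len" "turn (ss ! i) \<in> T"
    have st: "step (ss ! i) (ss ! Suc i)" using tg_step[OF G] i len_def by simp
    have pm: "set (placed (ss ! Suc i)) \<subseteq> set (placed (last ss))" using placed_mono[OF G] i len_def by simp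
    from step_cases[OF st] show "ends (ss ! i) \<noteq> None \<and> \<not> can_play (ss ! i) (turn (ss ! i)) \<and> hands (ss ! Suc i) = hands (ss ! i) \<and>
      ends (ss ! Suc i) = ends (ss ! i)"
    proof (elim disjE)
      assume "\<exists>t\<in>hands (ss ! i) (turn (ss ! i)). hands (ss ! Suc i) = (hands (ss ! i))(turn (ss ! i) := hands (ss ! i) (turn (ss ! i)) - {t}) \<and>
           placed (ss ! Suc i) = placed (ss ! i) @ [(turn (ss ! i), t)] \<and> turn (ss ! Suc i) = next_player (turn (ss ! i)) \<and>
           tnums t \<subseteq> endset (ss ! i) \<union> endset (ss ! Suc i) \<and> endset (ss ! Suc i) \<subseteq> endset (ss ! i) \<union> tnums t \<and> ends (ss ! Suc i) \<noteq> None"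
      then obtain t where "placed (ss ! Suc i) = placed (ss ! i) @ [(turn (ss ! i), t)]" by blast
      then have "(turn (ss ! i), t) \<in> set (placed (last ss))" using pm by auto
      then show ?thesis using neg i by blast
    qed auto
  qed
  have tT: "T = {1,3} \<or> T = {2,4}" using assms(2) by (simp add: losing_team_def teams_def)
  have T24: "T = {2,4}"
  proof (rule ccontr)
    assume "T \<noteq> {2,4}"
    then have T13: "T = {1,3}" using tT by blast
    have "turn (ss ! 0) = 1" "ends (ss ! 0) = None" using I0 by (auto simp: initial_state_def)
    then have "\<not> (ends (ss ! 0) \<noteq> None)" by simp
    then show False using NP[of 0] len2 T13 \<open>turn (ss ! 0) = 1\<close> by auto
  qed
  have turnT: "\<And>j. j < len \<Longrightarrow> odd j \<longleftrightarrow> turn (ss ! j) \<in> T"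
  proof -
    fix j assume "j < len"
    then have "turn (ss ! j) = j mod 4 + 1" using turn_inv[OF G] len_def by simp
    then show "odd j \<longleftrightarrow> turn (ss ! j) \<in> T" using T24 by auto presburger+
  qed
  have hconst: "\<And>j q. j < len \<Longrightarrow> q \<in> T \<Longrightarrow> hands (ss ! j) q = hands (ss ! 0) q"
  proof -
    fix j q assume jq: "j < len" "q \<in> T"
    then show "hands (ss ! j) q = hands (ss ! 0) q"
    proof (induction j)
      case 0 then show ?case by simp
    next
      case (Suc j)
      have st: "step (ss ! j) (ss ! Suc j)" using tg_step[OF G] Suc.prems len_def by simp
      show ?case
      proof (cases "turn (ss ! j) \<in> T")
        case True
        then show ?thesis using NP[of j] Suc by simp
      next
        case False
        then have "turn (ss ! j) \<noteq> q" using Suc.prems by blast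
        then have "hands (ss ! Suc j) q = hands (ss ! j) q" using step_cases[OF st] by auto
        then show ?thesis using Suc by simp
      qed
    qed
  qed
  have claim: "\<And>j. 1 \<le> j \<Longrightarrow> j < len \<Longrightarrow> \<exists>q\<in>T. \<forall>t\<in>hands (ss ! 0) q. tnums t \<inter> endset (ss ! j) = {}"
  proof -
    fix j assume j: "1 \<le> j" "j < len"
    have en: "ends (ss ! j) \<noteq> None" using ends_inv[OF G] j len_def by simp
    show "\<exists>q\<in>T. \<forall>t\<in>hands (ss ! 0) q. tnums t \<inter> endset (ss ! j) = {}"
    proof (cases "odd j")
      case True
      then have tq: "turn (ss ! j) \<in> T" using turnT j by blast
      have "\<not> can_play (ss ! j) (turn (ss ! j))"
      proof (cases "Suc j < len")
        case True then show ?thesis using NP tq by blast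
      next
        case False
        then have "j = len - 1" using j by linarith
        then have "ss ! j = last ss" using lastn by simp
        moreover have "turn (ss ! j) \<in> players" using tq T24 by (auto simp: players_def)
        ultimately show ?thesis using bl by (simp add: blocked_def)
      qed
      then have "\<forall>t\<in>hands (ss ! 0) (turn (ss ! j)). tnums t \<inter> endset (ss ! j) = {}"
        using noplay_disj[OF _ en] hconst[OF j(2) tq] by metis
      then show ?thesis using tq by blast
    next
      case False
      then obtain i where i: "j = Suc i" using j by (cases j) auto
      then have tq: "turn (ss ! i) \<in> T" using turnT[of i] j False by auto
      have P: "ends (ss ! i) \<noteq> None \<and> \<not> can_play (ss ! i) (turn (ss ! i)) \<and> hands (ss ! Suc i) = hands (ss ! i) \<and>
        ends (ss ! Suc i) = ends (ss ! i)" using NP[of i] tq i j by simp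
      then have "endset (ss ! j) = endset (ss ! i)" using i by (simp add: endset_def)
      moreover have "\<forall>t\<in>hands (ss ! 0) (turn (ss ! i)). tnums t \<inter> endset (ss ! i) = {}"
        using noplay_disj[of "ss ! i" "turn (ss ! i)"] P hconst[of i "turn (ss ! i)"] tq i j by simp
      ultimately show ?thesis using tq by metis
    qed
  qed
  have HI: "(\<forall>p\<in>players. hands (last ss) p \<subseteq> all_tiles) \<and>
         (\<forall>t\<in>all_tiles. (\<exists>p\<in>players. t \<in> hands (last ss) p) \<or> t \<in> snd ` set (placed (last ss))) \<and>
         endset (last ss) \<subseteq> {..6} \<and>
         (\<forall>x\<in>set (placed (last ss)). tnums (snd x) \<subseteq> (\<Union>k\<in>{1..len - 1}. endset (ss ! k)))"
    using hands_inv[OF G, of "len - 1"] lastn len2 len_def by simp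
  obtain l r where lr: "ends (last ss) = Some (l, r)" using bl by (auto simp: blocked_def)
  have l6: "l \<le> 6" using HI lr by (auto simp: endset_def)
  define N where "N q = \<Union> (tnums ` hands (ss ! 0) q)" for q
  have every: "\<And>n. n \<le> 6 \<Longrightarrow> n \<notin> N 2 \<or> n \<notin> N 4"
  proof -
    fix n :: nat assume n: "n \<le> 6"
    define tt where "tt = (min l n, max l n)"
    have tta: "tt \<in> all_tiles" using n l6 by (auto simp: tt_def all_tiles_def)
    have ttn: "n \<in> tnums tt" "l \<in> tnums tt" by (auto simp: tt_def tnums_def min_def max_def)
    have "\<And>p. p \<in> players \<Longrightarrow> tt \<notin> hands (last ss) p"
    proof
      fix p assume p: "p \<in> players" "tt \<in> hands (last ss) p"
      have "\<not> can_play (last ss) p" using bl p by (simp add: blocked_def)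
      then have "tnums tt \<inter> endset (last ss) = {}" using noplay_disj p lr by simp
      then show False using ttn lr by (auto simp: endset_def)
    qed
    then have "tt \<in> snd ` set (placed (last ss))" using HI tta by blast
    then have "n \<in> (\<Union>k\<in>{1..len - 1}. endset (ss ! k))" using HI ttn by blast
    then obtain k where k: "1 \<le> k" "k \<le> len - 1" "n \<in> endset (ss ! k)" by auto
    then have "k < len" using len2 by simp
    then obtain q where q: "q \<in> T" "\<forall>t\<in>hands (ss ! 0) q. tnums t \<inter> endset (ss ! k) = {}"
      using claim k by blast
    then have "n \<notin> N q" using k by (auto simp: N_def)
    then show "n \<notin> N 2 \<or> n \<notin> N 4" using q T24 by auto
  qed
  have hand0: "\<And>q. q \<in> players \<Longrightarrow> hands (ss ! 0) q \<subseteq> all_tiles \<and> card (hands (ss ! 0) q) = 7"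
    using I0 by (simp add: initial_state_def)
  have N6: "\<And>q. q \<in> players \<Longrightarrow> N q \<subseteq> {..6}"
    using hand0 by (fastforce simp: N_def tnums_def all_tiles_def)
  have fin: "\<And>q. q \<in> players \<Longrightarrow> finite (N q)" using N6 finite_subset by blast
  have p24: "2 \<in> players" "4 \<in> players" by (auto simp: players_def)
  have "N 2 \<inter> N 4 = {}" using every N6[OF p24(1)] by fastforce
  then have "card (N 2) + card (N 4) = card (N 2 \<union> N 4)" using fin p24 by (simp add: card_Un_disjoint)
  also have "\<dots> \<le> card {..6::nat}" using N6 p24 by (intro card_mono) auto
  finally have "card (N 2) + card (N 4) \<le> 7" by simp
  then obtain q where q: "q \<in> players" "card (N q) \<le> 3" 
  proof (cases "card (N 2) \<le> 3")
    case True then show ?thesis using that p24 by blast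
  next
    case False then have "card (N 4) \<le> 3" using \<open>card (N 2) + card (N 4) \<le> 7\<close> by linarith
    then show ?thesis using that p24 by blast
  qed
  have sub: "hands (ss ! 0) q \<subseteq> {(a,b). a \<in> N q \<and> b \<in> N q \<and> a \<le> b}"
    using hand0[OF q(1)] unfolding N_def tnums_def all_tiles_def by fastforce
  have "finite {(a,b). a \<in> N q \<and> b \<in> N q \<and> a \<le> b}"
    using fin[OF q(1)] by (rule finite_subset[rotated, OF finite_cartesian_product[OF _ fin[OF q(1)]]]) auto
  then have "card (hands (ss ! 0) q) \<le> card {(a,b). a \<in> N q \<and> b \<in> N q \<and> a \<le> b}"
    using sub card_mono by blast
  also have "\<dots> \<le> 6" using small_pairs fin[OF q(1)] q(2) by blast
  finally show False using hand0[OF q(1)] by simp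
qed

end
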